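(* Let $h,b>0$, $\rho=b/(h+b)$ and $0<\alpha\le\min\{1/2,2\rho,2(1-\rho)\}$. Let $\Theta=[-\alpha/20,\alpha/20]$ and for $\theta\in\Theta$ set $l_1(\theta)=\frac{4\rho-\alpha}{16-8\alpha}+\theta$, $l_2(\theta)=l_1(\theta)+\rho/2$, $r_2(\theta)=l_2(\theta)+1/4$, $r_1(\theta)=r_2(\theta)+(1-\rho)/2$, $w_1=2\pi/\rho$, $w_2=2\pi/(1-\rho)$. Define the density $f(x|\theta)=0$ for $x\notin[0,1]$ and, for $x\in[0,1]$: $f(x|\theta)=2-\alpha$ on $[0,l_1(\theta)]\cup[r_1(\theta),1]$; $f(x|\theta)=\alpha$ on $(l_2(\theta),r_2(\theta)]$; $f(x|\theta)=\alpha+(1-\alpha)(\cos(w_1(x-l_1(\theta)))+1)$ on $[l_1(\theta),l_2(\theta)]$; $f(x|\theta)=\alpha+(1-\alpha)(\cos(w_2(r_1(\theta)-x))+1)$ on $[r_2(\theta),r_1(\theta)]$. Let $x_\theta^*$ be the minimizer of $C_\theta(x)=\mathbb{E}_{X\sim f(\cdot|\theta)}[h(x-X)^++b(X-x)^+]$. Then for every $\theta\in\Theta$, $x_\theta^*\in[l_2(\theta),r_2(\theta)]$ and $$x_\theta^*=\frac{\rho}{2}+\frac{4\rho-\alpha}{16-8\alpha}+\frac18-\left(\frac2\alpha-2\right)\theta.$$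
   Context: For linear overage cost $h$ and underage cost $b$, the minimizer of the expected cost is the $\rho$-quantile of the demand distribution. *)

theory Defs
  imports "HOL-Analysis.Analysis"
begin

definition l1 :: "real \<Rightarrow> real \<Rightarrow> real \<Rightarrow> real" where
  "l1 \<rho> \<alpha> \<theta> = (4*\<rho> - \<alpha>) / (16 - 8*\<alpha>) + \<theta>"

definition l2 :: "real \<Rightarrow> real \<Rightarrow> real \<Rightarrow> real" where
  "l2 \<rho> \<alpha> \<theta> = l1 \<rho> \<alpha> \<theta> + \<rho>/2"

definition r2 :: "real \<Rightarrow> real \<Rightarrow> real \<Rightarrow> real" where
  "r2 \<rho> \<alpha> \<theta> = l2 \<rho> \<alpha> \<theta> + 1/4"

definition r1 :: "real \<Rightarrow> real \<Rightarrow> real \<Rightarrow> real" where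
  "r1 \<rho> \<alpha> \<theta> = r2 \<rho> \<alpha> \<theta> + (1-\<rho>)/2"

definition w1 :: "real \<Rightarrow> real" where "w1 \<rho> = 2*pi/\<rho>"
definition w2 :: "real \<Rightarrow> real" where "w2 \<rho> = 2*pi/(1-\<rho>)"

text \<open>The density f(x|theta); the pieces agree at the shared endpoints.\<close>
definition dens :: "real \<Rightarrow> real \<Rightarrow> real \<Rightarrow> real \<Rightarrow> real" where
  "dens \<rho> \<alpha> \<theta> x =
    (if x < 0 \<or> x > 1 then 0
     else if x \<le> l1 \<rho> \<alpha> \<theta> then 2 - \<alpha>
     else if r1 \<rho> \<alpha> \<theta> \<le> x then 2 - \<alpha>
     else if x \<le> l2 \<rho> \<alpha> \<theta> then \<alpha> + (1-\<alpha>) * (cos (w1 \<rho> * (x - l1 \<rho> \<alpha> \<theta>)) + 1)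
     else if x \<le> r2 \<rho> \<alpha> \<theta> then \<alpha>
     else \<alpha> + (1-\<alpha>) * (cos (w2 \<rho> * (r1 \<rho> \<alpha> \<theta> - x)) + 1))"

definition cost :: "real \<Rightarrow> real \<Rightarrow> real \<Rightarrow> real \<Rightarrow> real \<Rightarrow> real \<Rightarrow> real" where
  "cost h b \<rho> \<alpha> \<theta> x =
    (LINT X|lborel. dens \<rho> \<alpha> \<theta> X * (h * max (x - X) 0 + b * max (X - x) 0))"

end

theory Submission
  imports Defs
begin

lemma dens_meas: "dens r a t \<in> borel_measurable lborel"
  unfolding dens_def by measurable
lemma cost_integrable:
  assumes "\<And>x. 0 \<le> dens r a t x" "\<And>x. dens r a t x \<le> 2" "h \<ge> 0" "b \<ge> 0"
  shows "integrable lborel (\<lambda>X. dens r a t X * (h * max (y - X) 0 + b * max (X - y) 0))"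
proof (rule Bochner_Integration.integrable_bound)
  show "integrable lborel (\<lambda>X. (2*(\<bar>h\<bar>+\<bar>b\<bar>)*(\<bar>y\<bar>+1)) * indicator {0..1::real} X)"
    by (intro integrable_mult_right integrable_real_indicator) auto
  show "(\<lambda>X. dens r a t X * (h * max (y - X) 0 + b * max (X - y) 0)) \<in> borel_measurable lborel"
    using dens_meas by measurable
  show "AE X in lborel. norm (dens r a t X * (h * max (y - X) 0 + b * max (X - y) 0)) \<le> norm ((2*(\<bar>h\<bar>+\<bar>b\<bar>)*(\<bar>y\<bar>+1)) * indicator {0..1::real} X)"
  proof (rule AE_I2)
    fix X
    show "norm (dens r a t X * (h * max (y - X) 0 + b * max (X - y) 0)) \<le> norm ((2*(\<bar>h\<bar>+\<bar>b\<bar>)*(\<bar>y\<bar>+1)) * indicator {0..1::real} X)"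
    proof (cases "X \<in> {0..1}")
      case False then show ?thesis by (auto simp: dens_def)
    next
      case True
      have m1: "max (y - X) 0 \<le> \<bar>y\<bar>+1" "max (X - y) 0 \<le> \<bar>y\<bar>+1" using True by auto
      have "h * max (y - X) 0 + b * max (X - y) 0 \<le> h*(\<bar>y\<bar>+1) + b*(\<bar>y\<bar>+1)"
        using m1 assms(3,4) by (intro add_mono mult_left_mono) auto
      moreover have "0 \<le> h * max (y - X) 0 + b * max (X - y) 0" using assms(3,4) by auto
      ultimately have "\<bar>h * max (y - X) 0 + b * max (X - y) 0\<bar> \<le> (\<bar>h\<bar>+\<bar>b\<bar>)*(\<bar>y\<bar>+1)"
        using assms(3,4) by (simp add: algebra_simps)
      then have "\<bar>dens r a t X\<bar> * \<bar>h * max (y - X) 0 + b * max (X - y) 0\<bar> \<le> 2 * ((\<bar>h\<bar>+\<bar>b\<bar>)*(\<bar>y\<bar>+1))"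
        using assms(1)[of X] assms(2)[of X] by (intro mult_mono) auto
      moreover have "norm (dens r a t X * (h * max (y - X) 0 + b * max (X - y) 0)) = \<bar>dens r a t X\<bar> * \<bar>h * max (y - X) 0 + b * max (X - y) 0\<bar>"
        by (simp add: abs_mult)
      moreover have "norm ((2*(\<bar>h\<bar>+\<bar>b\<bar>)*(\<bar>y\<bar>+1)) * indicator {0..1::real} X) = 2 * ((\<bar>h\<bar>+\<bar>b\<bar>)*(\<bar>y\<bar>+1))"
        using True by (simp add: abs_mult)
      ultimately show ?thesis by linarith
    qed
  qed
qed


lemma excess_nonneg:
  fixes h b y x0 X :: real
  assumes "h > 0" "b > 0"
  shows "h * max (y - X) 0 + b * max (X - y) 0 - (h * max (x0 - X) 0 + b * max (X - x0) 0)
          - (y - x0) * (if X \<le> x0 then h else - b) \<ge> 0"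
  using assms mult_left_mono[of y X "h+b"] mult_left_mono[of X y "h+b"] by (auto simp: max_def algebra_simps)

lemma excess_up:
  fixes h b y x0 X :: real
  assumes "h > 0" "b > 0" "x0 < X" "X \<le> y"
  shows "h * max (y - X) 0 + b * max (X - y) 0 - (h * max (x0 - X) 0 + b * max (X - x0) 0)
          - (y - x0) * (if X \<le> x0 then h else - b) = (h+b)*(y-X)"
  using assms by (auto simp: max_def algebra_simps)

lemma excess_down:
  fixes h b y x0 X :: real
  assumes "h > 0" "b > 0" "y \<le> X" "X \<le> x0"
  shows "h * max (y - X) 0 + b * max (X - y) 0 - (h * max (x0 - X) 0 + b * max (X - x0) 0)
          - (y - x0) * (if X \<le> x0 then h else - b) = (h+b)*(X-y)"
  using assms by (auto simp: max_def algebra_simps)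

lemma generic:
  fixes D C :: "real \<Rightarrow> real" and h b \<rho> x0 lo hi \<alpha> y :: real
  assumes hb: "h > 0" "b > 0" "\<rho> * (h + b) = b"
    and D1: "(D has_integral 1) UNIV"
    and DF: "((\<lambda>X. if X \<le> x0 then D X else 0) has_integral \<rho>) UNIV"
    and Dnn: "\<And>X. 0 \<le> D X"
    and Cint: "\<And>y. ((\<lambda>X. D X * (h * max (y - X) 0 + b * max (X - y) 0)) has_integral C y) UNIV"
    and Dpos: "\<And>X. lo \<le> X \<Longrightarrow> X \<le> hi \<Longrightarrow> \<alpha> \<le> D X"
    and a: "\<alpha> > 0" "lo < x0" "x0 < hi"
  shows "C x0 \<le> C y \<and> (y \<noteq> x0 \<longrightarrow> C x0 < C y)"
proof -
  define s where "s X = (if X \<le> x0 then h else - b)" for X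
  define L where "L y X = h * max (y - X) 0 + b * max (X - y) 0" for y X
  have "((\<lambda>X. (h+b) * (if X \<le> x0 then D X else 0) - b * D X) has_integral ((h+b)*\<rho> - b*1)) UNIV"
    by (intro has_integral_diff has_integral_mult_right D1 DF)
  moreover have "(\<lambda>X. (h+b) * (if X \<le> x0 then D X else 0) - b * D X) = (\<lambda>X. D X * s X)"
    by (auto simp: s_def algebra_simps)
  ultimately have Ds: "((\<lambda>X. (y - x0) * (D X * s X)) has_integral 0) UNIV"
    using hb(3) has_integral_mult_right[of _ 0 UNIV "y - x0"] by (simp add: algebra_simps)
  have CC: "((\<lambda>X. D X * L y X - D X * L x0 X) has_integral C y - C x0) UNIV"
    unfolding L_def by (intro has_integral_diff Cint)
  have ex0: "L y X - L x0 X - (y - x0) * s X \<ge> 0" for X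
    unfolding L_def s_def by (rule excess_nonneg[OF hb(1,2)])
  have main: "G \<le> C y - C x0" if g: "(g has_integral G) UNIV"
    and gle: "\<And>X. g X \<le> D X * (L y X - L x0 X - (y - x0) * s X)" for g G
  proof -
    have "((\<lambda>X. (y - x0) * (D X * s X) + g X) has_integral (0 + G)) UNIV"
      by (intro has_integral_add Ds g)
    moreover have "(y - x0) * (D X * s X) + g X \<le> D X * L y X - D X * L x0 X" for X
      using gle[of X] by (simp add: algebra_simps)
    ultimately show ?thesis using has_integral_le[OF _ CC] by force
  qed
  have le: "C x0 \<le> C y"
    using main[of "\<lambda>_. 0" 0] ex0 Dnn by simp
  have lt: "C x0 < C y" if "y \<noteq> x0"
  proof (cases "y > x0")
    case True
    define m where "m = min y hi"
    define a1 where "a1 = x0 + (m - x0)/4"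
    define b1 where "b1 = x0 + (m - x0)/2"
    have m: "x0 < m" "m \<le> y" "m \<le> hi" using True a by (auto simp: m_def)
    define K where "K = \<alpha> * ((h+b)*(y - b1))"
    have "b1 < y" using m unfolding b1_def by (simp add: field_simps)
    then have Kpos: "K > 0" unfolding K_def using m hb a by (auto intro!: mult_pos_pos)
    have ab: "a1 \<le> b1" using m unfolding a1_def b1_def by (simp add: field_simps)
    have gi: "((\<lambda>X. if X \<in> {a1..b1} then K else 0) has_integral K * (b1 - a1)) UNIV"
      unfolding has_integral_restrict_UNIV
      using has_integral_const_real[of K a1 b1] ab by (simp add: mult.commute)
    have "K * (b1 - a1) \<le> C y - C x0"
    proof (rule main[OF gi])
      fix X
      show "(if X \<in> {a1..b1} then K else 0) \<le> D X * (L y X - L x0 X - (y - x0) * s X)"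
      proof (cases "X \<in> {a1..b1}")
        case False
        have "0 \<le> D X * (L y X - L x0 X - (y - x0) * s X)" using ex0[of X] Dnn[of X] by simp
        then show ?thesis using False by auto
      next
        case True
        have X: "x0 < X" "X \<le> y" "lo \<le> X" "X \<le> hi" "X \<le> b1"
          using True m a by (auto simp: a1_def b1_def field_simps)
        have e: "L y X - L x0 X - (y - x0) * s X = (h+b)*(y-X)"
          unfolding L_def s_def by (rule excess_up[OF hb(1,2) X(1,2)])
        have "K \<le> D X * ((h+b)*(y-X))" unfolding K_def
          using Dpos[OF X(3,4)] X hb a m \<open>b1 < y\<close> by (intro mult_mono) (auto intro!: mult_left_mono)
        then show ?thesis using True e by simp
      qed
    qed
    moreover have "K * (b1 - a1) > 0" using Kpos m by (simp add: a1_def b1_def)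
    ultimately show ?thesis by linarith
  next
    case False
    then have yl: "y < x0" using that by auto
    define m where "m = max y lo"
    define a1 where "a1 = x0 - (x0 - m)/2"
    define b1 where "b1 = x0 - (x0 - m)/4"
    have m: "m < x0" "y \<le> m" "lo \<le> m" using yl a by (auto simp: m_def)
    define K where "K = \<alpha> * ((h+b)*(a1 - y))"
    have "y < a1" using m unfolding a1_def by (simp add: field_simps)
    then have Kpos: "K > 0" unfolding K_def using m hb a by (auto intro!: mult_pos_pos)
    have ab: "a1 \<le> b1" using m unfolding a1_def b1_def by (simp add: field_simps)
    have gi: "((\<lambda>X. if X \<in> {a1..b1} then K else 0) has_integral K * (b1 - a1)) UNIV"
      unfolding has_integral_restrict_UNIV
      using has_integral_const_real[of K a1 b1] ab by (simp add: mult.commute)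
    have "K * (b1 - a1) \<le> C y - C x0"
    proof (rule main[OF gi])
      fix X
      show "(if X \<in> {a1..b1} then K else 0) \<le> D X * (L y X - L x0 X - (y - x0) * s X)"
      proof (cases "X \<in> {a1..b1}")
        case False
        have "0 \<le> D X * (L y X - L x0 X - (y - x0) * s X)" using ex0[of X] Dnn[of X] by simp
        then show ?thesis using False by auto
      next
        case True
        have X: "y \<le> X" "X \<le> x0" "lo \<le> X" "X \<le> hi" "a1 \<le> X"
          using True m a by (auto simp: a1_def b1_def field_simps)
        have e: "L y X - L x0 X - (y - x0) * s X = (h+b)*(X-y)"
          unfolding L_def s_def by (rule excess_down[OF hb(1,2) X(1,2)])
        have "K \<le> D X * ((h+b)*(X-y))" unfolding K_def
          using Dpos[OF X(3,4)] X hb a m \<open>y < a1\<close> by (intro mult_mono) (auto intro!: mult_left_mono)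
        then show ?thesis using True e by simp
      qed
    qed
    moreover have "K * (b1 - a1) > 0" using Kpos m by (simp add: a1_def b1_def)
    ultimately show ?thesis by linarith
  qed
  show ?thesis using le lt by blast
qed


context
  fixes \<rho> \<alpha> \<theta> :: real
  assumes A: "0 < \<alpha>" "\<alpha> \<le> 1/2" "\<alpha> \<le> 2*\<rho>" "\<alpha> \<le> 2*(1-\<rho>)" "\<bar>\<theta>\<bar> \<le> \<alpha>/20"
begin

lemma rho_bounds: "0 < \<rho>" "\<rho> < 1" using A by auto

lemma q_bounds: "\<alpha>/16 \<le> (4*\<rho> - \<alpha>) / (16 - 8*\<alpha>)" "(4*\<rho> - \<alpha>) / (16 - 8*\<alpha>) \<le> 1/4 - \<alpha>/16"
proof -
  have d: "16 - 8*\<alpha> > 0" using A by auto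
  have "\<alpha>/16 \<le> \<alpha>/(16 - 8*\<alpha>)" using A d by (intro divide_left_mono) auto
  also have "\<dots> \<le> (4*\<rho> - \<alpha>) / (16 - 8*\<alpha>)" using A d by (intro divide_right_mono) auto
  finally show "\<alpha>/16 \<le> (4*\<rho> - \<alpha>) / (16 - 8*\<alpha>)" .
  have "(4*\<rho> - \<alpha>) / (16 - 8*\<alpha>) \<le> (4 - 3*\<alpha>) / (16 - 8*\<alpha>)" using A d by (intro divide_right_mono) auto
  also have "\<dots> = 1/4 - \<alpha>/(16 - 8*\<alpha>)" using d by (simp add: field_simps)
  also have "\<dots> \<le> 1/4 - \<alpha>/16" using \<open>\<alpha>/16 \<le> \<alpha>/(16 - 8*\<alpha>)\<close> by simp
  finally show "(4*\<rho> - \<alpha>) / (16 - 8*\<alpha>) \<le> 1/4 - \<alpha>/16" .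
qed

lemma order:
  "0 < l1 \<rho> \<alpha> \<theta>" "l1 \<rho> \<alpha> \<theta> < l2 \<rho> \<alpha> \<theta>" "l2 \<rho> \<alpha> \<theta> < r2 \<rho> \<alpha> \<theta>"
  "r2 \<rho> \<alpha> \<theta> < r1 \<rho> \<alpha> \<theta>" "r1 \<rho> \<alpha> \<theta> < 1"
proof -
  have th: "-\<alpha>/20 \<le> \<theta>" "\<theta> \<le> \<alpha>/20" using A(5) by (auto simp: abs_le_iff)
  show "0 < l1 \<rho> \<alpha> \<theta>" "l1 \<rho> \<alpha> \<theta> < l2 \<rho> \<alpha> \<theta>" "l2 \<rho> \<alpha> \<theta> < r2 \<rho> \<alpha> \<theta>"
  "r2 \<rho> \<alpha> \<theta> < r1 \<rho> \<alpha> \<theta>" "r1 \<rho> \<alpha> \<theta> < 1"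
  proof -
    have e: "\<rho>/2 + 1/4 + (1-\<rho>)/2 = (3/4::real)" by (simp add: field_simps)
    show "0 < l1 \<rho> \<alpha> \<theta>" "l1 \<rho> \<alpha> \<theta> < l2 \<rho> \<alpha> \<theta>" "l2 \<rho> \<alpha> \<theta> < r2 \<rho> \<alpha> \<theta>"
      "r2 \<rho> \<alpha> \<theta> < r1 \<rho> \<alpha> \<theta>" "r1 \<rho> \<alpha> \<theta> < 1"
      unfolding l1_def l2_def r2_def r1_def using q_bounds th rho_bounds A e by linarith+
  qed
qed

lemma dens_nonneg: "0 \<le> dens \<rho> \<alpha> \<theta> x"
  and dens_le2: "dens \<rho> \<alpha> \<theta> x \<le> 2"
  and dens_ge: "0 \<le> x \<Longrightarrow> x \<le> 1 \<Longrightarrow> \<alpha> \<le> dens \<rho> \<alpha> \<theta> x"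
proof -
  have c1: "0 \<le> (1-\<alpha>) * (cos t + 1)" for t
  proof -
    have "0 \<le> cos t + 1" using cos_ge_minus_one[of t] by linarith
    then show ?thesis using A by simp
  qed
  have c2: "(1-\<alpha>) * (cos t + 1) \<le> 2*(1-\<alpha>)" for t
  proof -
    have "cos t + 1 \<le> 2" using cos_le_one[of t] by linarith
    then have "(1-\<alpha>) * (cos t + 1) \<le> (1-\<alpha>) * 2" using A by (intro mult_left_mono) auto
    then show ?thesis by simp
  qed
  show "0 \<le> dens \<rho> \<alpha> \<theta> x" unfolding dens_def using A c1 by auto
  show "dens \<rho> \<alpha> \<theta> x \<le> 2" unfolding dens_def using A c2[of "w1 \<rho> * (x - l1 \<rho> \<alpha> \<theta>)"] c2[of "w2 \<rho> * (r1 \<rho> \<alpha> \<theta> - x)"] by auto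
  show "0 \<le> x \<Longrightarrow> x \<le> 1 \<Longrightarrow> \<alpha> \<le> dens \<rho> \<alpha> \<theta> x" unfolding dens_def using A c1 by auto
qed

lemma w1_eq: "w1 \<rho> * (l2 \<rho> \<alpha> \<theta> - l1 \<rho> \<alpha> \<theta>) = pi"
  using rho_bounds by (simp add: w1_def l2_def)
lemma w2_eq: "w2 \<rho> * (r1 \<rho> \<alpha> \<theta> - r2 \<rho> \<alpha> \<theta>) = pi"
  using rho_bounds by (simp add: w2_def r1_def)

lemma int1: "(dens \<rho> \<alpha> \<theta> has_integral (2-\<alpha>) * l1 \<rho> \<alpha> \<theta>) {0..l1 \<rho> \<alpha> \<theta>}"
proof (rule has_integral_eq[where f="\<lambda>_. 2-\<alpha>"])
  show "((\<lambda>_. 2-\<alpha>) has_integral (2-\<alpha>) * l1 \<rho> \<alpha> \<theta>) {0..l1 \<rho> \<alpha> \<theta>}"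
    using has_integral_const_real[of "2-\<alpha>" 0 "l1 \<rho> \<alpha> \<theta>"] order by (simp add: mult.commute)
qed (use order in \<open>auto simp: dens_def\<close>)

lemma int6: "(dens \<rho> \<alpha> \<theta> has_integral (2-\<alpha>) * (1 - r1 \<rho> \<alpha> \<theta>)) {r1 \<rho> \<alpha> \<theta>..1}"
proof (rule has_integral_eq[where f="\<lambda>_. 2-\<alpha>"])
  show "((\<lambda>_. 2-\<alpha>) has_integral (2-\<alpha>) * (1 - r1 \<rho> \<alpha> \<theta>)) {r1 \<rho> \<alpha> \<theta>..1}"
    using has_integral_const_real[of "2-\<alpha>" "r1 \<rho> \<alpha> \<theta>" 1] order by (simp add: mult.commute)
qed (use order in \<open>auto simp: dens_def\<close>)

lemma int3: assumes "l2 \<rho> \<alpha> \<theta> \<le> c" "c \<le> r2 \<rho> \<alpha> \<theta>"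
  shows "(dens \<rho> \<alpha> \<theta> has_integral \<alpha> * (c - l2 \<rho> \<alpha> \<theta>)) {l2 \<rho> \<alpha> \<theta>..c}"
proof (rule has_integral_eq[where f="\<lambda>_. \<alpha>"])
  show "((\<lambda>_. \<alpha>) has_integral \<alpha> * (c - l2 \<rho> \<alpha> \<theta>)) {l2 \<rho> \<alpha> \<theta>..c}"
    using has_integral_const_real[of "\<alpha>" "l2 \<rho> \<alpha> \<theta>" c] assms by (simp add: mult.commute)
  fix x assume x: "x \<in> {l2 \<rho> \<alpha> \<theta>..c}"
  show "\<alpha> = dens \<rho> \<alpha> \<theta> x"
  proof (cases "x = l2 \<rho> \<alpha> \<theta>")
    case True
    then show ?thesis using order w1_eq by (simp add: dens_def)
  next
    case False
    then show ?thesis using order x assms by (auto simp: dens_def)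
  qed
qed

lemma int2: "(dens \<rho> \<alpha> \<theta> has_integral \<rho>/2) {l1 \<rho> \<alpha> \<theta>..l2 \<rho> \<alpha> \<theta>}"
proof -
  define L where "L = l1 \<rho> \<alpha> \<theta>"
  define W where "W = w1 \<rho>"
  have W: "W \<noteq> 0" using rho_bounds by (simp add: W_def w1_def)
  define G where "G x = x + (1-\<alpha>) * sin (W * (x - L)) / W" for x
  have d: "(G has_vector_derivative (1 + (1-\<alpha>) * cos (W * (x - L)))) (at x within {l1 \<rho> \<alpha> \<theta>..l2 \<rho> \<alpha> \<theta>})" for x
  proof -
    have "(G has_real_derivative (1 + (1-\<alpha>) * cos (W * (x - L)))) (at x)"
      unfolding G_def using W by (auto intro!: derivative_eq_intros)
    then show ?thesis
      by (simp add: has_real_derivative_iff_has_vector_derivative has_vector_derivative_at_within)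
  qed
  have "((\<lambda>x. 1 + (1-\<alpha>) * cos (W * (x - L))) has_integral (G (l2 \<rho> \<alpha> \<theta>) - G (l1 \<rho> \<alpha> \<theta>))) {l1 \<rho> \<alpha> \<theta>..l2 \<rho> \<alpha> \<theta>}"
    using order by (intro fundamental_theorem_of_calculus d) auto
  moreover have "G (l2 \<rho> \<alpha> \<theta>) - G (l1 \<rho> \<alpha> \<theta>) = \<rho>/2"
    using w1_eq by (simp add: G_def L_def W_def l2_def)
  ultimately have I: "((\<lambda>x. 1 + (1-\<alpha>) * cos (W * (x - L))) has_integral \<rho>/2) {l1 \<rho> \<alpha> \<theta>..l2 \<rho> \<alpha> \<theta>}"
    by simp
  show ?thesis
  proof (rule has_integral_eq[OF _ I])
    fix x assume x: "x \<in> {l1 \<rho> \<alpha> \<theta>..l2 \<rho> \<alpha> \<theta>}"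
    show "1 + (1-\<alpha>) * cos (W * (x - L)) = dens \<rho> \<alpha> \<theta> x"
    proof (cases "x = l1 \<rho> \<alpha> \<theta>")
      case True
      then show ?thesis using order by (simp add: dens_def L_def)
    next
      case False
      then show ?thesis using order x by (auto simp: dens_def L_def W_def algebra_simps)
    qed
  qed
qed

lemma int5: "(dens \<rho> \<alpha> \<theta> has_integral (1-\<rho>)/2) {r2 \<rho> \<alpha> \<theta>..r1 \<rho> \<alpha> \<theta>}"
proof -
  define R where "R = r1 \<rho> \<alpha> \<theta>"
  define W where "W = w2 \<rho>"
  have W: "W \<noteq> 0" using rho_bounds by (simp add: W_def w2_def)
  define G where "G x = x - (1-\<alpha>) * sin (W * (R - x)) / W" for x
  have d: "(G has_vector_derivative (1 + (1-\<alpha>) * cos (W * (R - x)))) (at x within {r2 \<rho> \<alpha> \<theta>..r1 \<rho> \<alpha> \<theta>})" for x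
  proof -
    have "(G has_real_derivative (1 + (1-\<alpha>) * cos (W * (R - x)))) (at x)"
      unfolding G_def using W by (auto intro!: derivative_eq_intros)
    then show ?thesis
      by (simp add: has_real_derivative_iff_has_vector_derivative has_vector_derivative_at_within)
  qed
  have "((\<lambda>x. 1 + (1-\<alpha>) * cos (W * (R - x))) has_integral (G (r1 \<rho> \<alpha> \<theta>) - G (r2 \<rho> \<alpha> \<theta>))) {r2 \<rho> \<alpha> \<theta>..r1 \<rho> \<alpha> \<theta>}"
    using order by (intro fundamental_theorem_of_calculus d) auto
  moreover have "G (r1 \<rho> \<alpha> \<theta>) - G (r2 \<rho> \<alpha> \<theta>) = (1-\<rho>)/2"
    using w2_eq by (simp add: G_def R_def W_def r1_def)
  ultimately have I: "((\<lambda>x. 1 + (1-\<alpha>) * cos (W * (R - x))) has_integral (1-\<rho>)/2) {r2 \<rho> \<alpha> \<theta>..r1 \<rho> \<alpha> \<theta>}"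
    by simp
  show ?thesis
  proof (rule has_integral_eq[OF _ I])
    fix x assume x: "x \<in> {r2 \<rho> \<alpha> \<theta>..r1 \<rho> \<alpha> \<theta>}"
    show "1 + (1-\<alpha>) * cos (W * (R - x)) = dens \<rho> \<alpha> \<theta> x"
    proof (cases "x = r2 \<rho> \<alpha> \<theta>")
      case True
      then show ?thesis using order w2_eq by (simp add: dens_def R_def W_def)
    next
      case False
      then show ?thesis using order x by (auto simp: dens_def R_def W_def algebra_simps)
    qed
  qed
qed

end

theorem lemma3:
  fixes h b \<rho> \<alpha> \<theta> :: real
  assumes "h > 0" and "b > 0" and "\<rho> = b / (h + b)"
    and "0 < \<alpha>" and "\<alpha> \<le> 1/2" and "\<alpha> \<le> 2*\<rho>" and "\<alpha> \<le> 2*(1-\<rho>)"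
    and "\<theta> \<in> {-\<alpha>/20 .. \<alpha>/20}"
  shows "(\<forall>x. (\<forall>y. cost h b \<rho> \<alpha> \<theta> x \<le> cost h b \<rho> \<alpha> \<theta> y) \<longleftrightarrow>
              x = \<rho>/2 + (4*\<rho> - \<alpha>)/(16 - 8*\<alpha>) + 1/8 - (2/\<alpha> - 2)*\<theta>)
         \<and> \<rho>/2 + (4*\<rho> - \<alpha>)/(16 - 8*\<alpha>) + 1/8 - (2/\<alpha> - 2)*\<theta> \<in> {l2 \<rho> \<alpha> \<theta> .. r2 \<rho> \<alpha> \<theta>}"
proof -
  define x0 where "x0 = \<rho>/2 + (4*\<rho> - \<alpha>)/(16 - 8*\<alpha>) + 1/8 - (2/\<alpha> - 2)*\<theta>"
  define D where "D = dens \<rho> \<alpha> \<theta>"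
  have th: "\<bar>\<theta>\<bar> \<le> \<alpha>/20" using assms(8) by (auto simp: abs_le_iff)
  note A = assms(4-7) th
  note ord = order[OF A]
  have tb: "\<bar>(2/\<alpha> - 1) * \<theta>\<bar> \<le> 1/10"
  proof -
    have p: "0 \<le> 2/\<alpha> - 1" using A by (simp add: field_simps)
    have "\<bar>(2/\<alpha> - 1) * \<theta>\<bar> = (2/\<alpha> - 1) * \<bar>\<theta>\<bar>" using p by (simp add: abs_mult)
    also have "\<dots> \<le> (2/\<alpha>) * \<bar>\<theta>\<bar>" by (intro mult_right_mono) auto
    also have "\<dots> \<le> (2/\<alpha>) * (\<alpha>/20)" using th A by (intro mult_left_mono) auto
    also have "\<dots> = 1/10" using A by simp
    finally show ?thesis .
  qed
  have x0l2: "x0 - l2 \<rho> \<alpha> \<theta> = 1/8 - (2/\<alpha> - 1) * \<theta>"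
    unfolding x0_def l2_def l1_def by (simp add: algebra_simps)
  have x0in: "l2 \<rho> \<alpha> \<theta> < x0" "x0 < r2 \<rho> \<alpha> \<theta>"
    using x0l2 tb unfolding r2_def by (auto simp: abs_le_iff)
  have Fval: "(2-\<alpha>) * l1 \<rho> \<alpha> \<theta> + \<rho>/2 + \<alpha> * (x0 - l2 \<rho> \<alpha> \<theta>) = \<rho>"
  proof -
    have d: "16 - 8*\<alpha> \<noteq> 0" using A by auto
    have e1: "(2-\<alpha>) * l1 \<rho> \<alpha> \<theta> = (4*\<rho> - \<alpha>)/8 + (2-\<alpha>)*\<theta>"
      unfolding l1_def using d by (simp add: field_simps)
    have e2: "\<alpha> * (x0 - l2 \<rho> \<alpha> \<theta>) = \<alpha>/8 - (2 - \<alpha>)*\<theta>"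
      unfolding x0l2 using A by (simp add: field_simps)
    show ?thesis unfolding e1 e2 by (simp add: field_simps)
  qed
  have Tval: "(2-\<alpha>) * l1 \<rho> \<alpha> \<theta> + \<rho>/2 + \<alpha> * (r2 \<rho> \<alpha> \<theta> - l2 \<rho> \<alpha> \<theta>) + (1-\<rho>)/2
      + (2-\<alpha>) * (1 - r1 \<rho> \<alpha> \<theta>) = 1"
    unfolding r1_def r2_def l2_def by (simp add: field_simps)
  have I02: "(D has_integral (2-\<alpha>) * l1 \<rho> \<alpha> \<theta> + \<rho>/2) {0..l2 \<rho> \<alpha> \<theta>}"
    unfolding D_def using ord by (intro has_integral_combine[OF _ _ int1[OF A] int2[OF A]]) auto
  have I0x: "(D has_integral \<rho>) {0..x0}"
  proof -
    have "(D has_integral (2-\<alpha>) * l1 \<rho> \<alpha> \<theta> + \<rho>/2 + \<alpha> * (x0 - l2 \<rho> \<alpha> \<theta>)) {0..x0}"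
      using ord x0in I02 unfolding D_def
      by (intro has_integral_combine[OF _ _ _ int3[OF A]]) auto
    then show ?thesis using Fval by simp
  qed
  have I01: "(D has_integral 1) {0..1}"
  proof -
    have a: "(D has_integral (2-\<alpha>) * l1 \<rho> \<alpha> \<theta> + \<rho>/2 + \<alpha> * (r2 \<rho> \<alpha> \<theta> - l2 \<rho> \<alpha> \<theta>)) {0..r2 \<rho> \<alpha> \<theta>}"
      using ord I02 unfolding D_def
      by (intro has_integral_combine[OF _ _ _ int3[OF A]]) auto
    have b: "(D has_integral (2-\<alpha>) * l1 \<rho> \<alpha> \<theta> + \<rho>/2 + \<alpha> * (r2 \<rho> \<alpha> \<theta> - l2 \<rho> \<alpha> \<theta>) + (1-\<rho>)/2) {0..r1 \<rho> \<alpha> \<theta>}"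
      using ord a unfolding D_def
      by (intro has_integral_combine[OF _ _ _ int5[OF A]]) auto
    have "(D has_integral (2-\<alpha>) * l1 \<rho> \<alpha> \<theta> + \<rho>/2 + \<alpha> * (r2 \<rho> \<alpha> \<theta> - l2 \<rho> \<alpha> \<theta>) + (1-\<rho>)/2
      + (2-\<alpha>) * (1 - r1 \<rho> \<alpha> \<theta>)) {0..1}"
      using ord b unfolding D_def
      by (intro has_integral_combine[OF _ _ _ int6[OF A]]) auto
    then show ?thesis using Tval by simp
  qed
  have Dout: "D X = 0" if "X < 0 \<or> X > 1" for X
    using that unfolding D_def dens_def by auto
  have D1: "(D has_integral 1) UNIV"
  proof -
    have "(\<lambda>X. if X \<in> {0..1} then D X else 0) = D" using Dout by force
    then show ?thesis using I01 has_integral_restrict_UNIV[of "{0..1}" D 1] by simp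
  qed
  have DF: "((\<lambda>X. if X \<le> x0 then D X else 0) has_integral \<rho>) UNIV"
  proof -
    have "(\<lambda>X. if X \<in> {0..x0} then D X else 0) = (\<lambda>X. if X \<le> x0 then D X else 0)"
      using Dout by force
    then show ?thesis using I0x has_integral_restrict_UNIV[of "{0..x0}" D \<rho>] by simp
  qed
  have hb: "\<rho> * (h + b) = b" using assms(1-3) by simp
  have Cint: "((\<lambda>X. D X * (h * max (y - X) 0 + b * max (X - y) 0)) has_integral cost h b \<rho> \<alpha> \<theta> y) UNIV" for y
    unfolding cost_def D_def
    by (intro has_integral_integral_lborel cost_integrable dens_nonneg[OF A] dens_le2[OF A])
       (use assms(1,2) in auto)
  have gen: "cost h b \<rho> \<alpha> \<theta> x0 \<le> cost h b \<rho> \<alpha> \<theta> y \<and> (y \<noteq> x0 \<longrightarrow> cost h b \<rho> \<alpha> \<theta> x0 < cost h b \<rho> \<alpha> \<theta> y)" for y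
    using ord x0in
    by (intro generic[OF assms(1,2) hb D1 DF _ Cint, where lo=0 and hi=1 and \<alpha>=\<alpha>])
       (auto simp: D_def intro: dens_nonneg[OF A] dens_ge[OF A] assms(4))
  have "(\<forall>y. cost h b \<rho> \<alpha> \<theta> x \<le> cost h b \<rho> \<alpha> \<theta> y) \<longleftrightarrow> x = x0" for x
  proof
    assume m: "\<forall>y. cost h b \<rho> \<alpha> \<theta> x \<le> cost h b \<rho> \<alpha> \<theta> y"
    show "x = x0"
    proof (rule ccontr)
      assume "x \<noteq> x0"
      then have "cost h b \<rho> \<alpha> \<theta> x0 < cost h b \<rho> \<alpha> \<theta> x" using gen[of x] by blast
      with m show False by (meson not_le)
    qed
  next
    assume "x = x0"
    then show "\<forall>y. cost h b \<rho> \<alpha> \<theta> x \<le> cost h b \<rho> \<alpha> \<theta> y" using gen by blast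
  qed
  then show ?thesis using x0in unfolding x0_def by auto
qed

end
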